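(* In the bilevel setting of the context, suppose (A2) and (A4) hold. Then the GMFCQ holds at $x^*$ for $\Omega_1$ if and only if the GMFCQ holds for $\Omega_2$ at $(x^*,y^*,\mu^*,\xi^* )$.
   Context: Lower-level problem $(P_x)$: $\min_yf(x,y)$ s.t. $h(x,y)=0$, $g(x,y)\le0$; upper-level constraints $H(x,y)=0\in\mathbb{R}^p$, $G(x,y)\le0\in\mathbb{R}^q$, upper objective $F$; $(x,y)\in\mathbb{R}^n\times\mathbb{R}^m$, $h\to\mathbb{R}^r$, $g\to\mathbb{R}^s$; $f,g,h\in C^3$, $F,G,H\in C^2$ around $(x^*,y^* )$. $\mathcal{L}(x;y,\mu,\xi)=f+\mu^Th+\xi^Tg$; $(\mu^*,\xi^* )$ satisfies $\nabla_y\mathcal{L}(x^*;y^*,\mu^*,\xi^* )=0$, $h(x^*,y^* )=0$, $0\le\xi^*\perp g(x^*,y^* )\le0$. $I_G=\{i:G_i(x^*,y^* )=0\}$. (A2) SSOSC: for every such KKT multiplier, $d_y^T\nabla^2_{yy}\mathcal{L}(x^*;y^*,\mu^*,\xi^* )d_y>0$ for all $d_y\ne0$ with $\mathcal{J}_yh(x^*,y^* )d_y=0$ and $\nabla_yg_i(x^*,y^* )^Td_y=0$ whenever $g_i(x^*,y^* )=0,\xi^*_i>0$. (A4) LICQ: $\{\nabla_yh_i(x^*,y^* )\}_{i\in[r]}\cup\{\nabla_yg_i(x^*,y^* ):g_i(x^*,y^* )=0\}$ linearly independent. Under (A2),(A4) there are locally Lipschitz $(y(x),\mu(x),\xi(x))$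 near $x^*$, equal to $(y^*,\mu^*,\xi^* )$ at $x^*$, locally uniquely solving the KKT system of $(P_x)$. $\Omega_1=\{x:H(x,y(x))=0,G(x,y(x))\le0\}$; $\Omega_2=\{(x,y,\mu,\xi):H(x,y)=0,G(x,y)\le0,\nabla_y\mathcal{L}(x;y,\mu,\xi)=0,h(x,y)=0,g(x,y)-\Pi_{\mathbb{R}^s_-}(g(x,y)+\xi)=0\}$ with $\Pi_{\mathbb{R}^s_-}(z)_i=\min\{0,z_i\}$. $\partial\Pi_{\mathbb{R}^s_-}(z)$ (Clarke Jacobian) = diagonal $W=\mathrm{diag}(w)$ with $w_i=1$ if $z_i<0$, $0$ if $z_i>0$, $w_i\in[0,1]$ if $z_i=0$. All derivatives below at $(x^*,y^*,\mu^*,\xi^* )$. For such $W$: $\mathcal{A}(W)=\begin{pmatrix}\nabla^2_{yy}\mathcal{L}&\mathcal{J}_yh^T&\mathcal{J}_yg^T\\ \mathcal{J}_yh&0&0\\(I-W)\mathcal{J}_yg&0&-W\end{pmatrix}$ (invertible under (A2),(A4)), $\mathcal{H}(W)=\mathcal{A}(W)^{-1}\begin{pmatrix}\nabla^2_{yx}\mathcal{L}\\ \mathcal{J}_xh\\(I-W)\mathcal{J}_xg\end{pmatrix}$. GMFCQ for $\Omega_1$ at $x^*$: for every $W\in\partial\Pi_{\mathbb{R}^s_-}(g(x^*,y^* )+\xi^* )$, $M:=\mathcal{J}_xH-\mathcal{J}_yH[I_m\ 0\ 0]\mathcal{H}(W)$ has full row rank and there is $d_x$ with $Md_x=0$ and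 $(\nabla_xG_i^T-\nabla_yG_i^T[I_m\ 0\ 0]\mathcal{H}(W))d_x<0$ for $i\in I_G$. GMFCQ for $\Omega_2$ at $(x^*,y^*,\mu^*,\xi^* )$: for every such $W$, $A=\begin{pmatrix}\mathcal{J}_xH&\mathcal{J}_yH&0&0\\ \nabla^2_{yx}\mathcal{L}&\nabla^2_{yy}\mathcal{L}&\mathcal{J}_yh^T&\mathcal{J}_yg^T\\ \mathcal{J}_xh&\mathcal{J}_yh&0&0\\(I-W)\mathcal{J}_xg&(I-W)\mathcal{J}_yg&0&-W\end{pmatrix}$ has full row rank and there is $d=(d_x,d_y,d_\mu,d_\xi)\in\ker A$ with $\nabla_xG_i^Td_x+\nabla_yG_i^Td_y<0$ for $i\in I_G$. *)

theory Defs
  imports "HOL-Analysis.Analysis"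
begin

definition C1_on :: "'a::real_normed_vector set \<Rightarrow> ('a \<Rightarrow> 'b::real_normed_vector) \<Rightarrow> bool" where
  "C1_on U \<phi> \<longleftrightarrow> (\<exists>D. continuous_on U D \<and> (\<forall>z\<in>U. (\<phi> has_derivative blinfun_apply (D z)) (at z)))"

definition C2_on :: "'a::real_normed_vector set \<Rightarrow> ('a \<Rightarrow> 'b::real_normed_vector) \<Rightarrow> bool" where
  "C2_on U \<phi> \<longleftrightarrow> (\<exists>D. C1_on U D \<and> (\<forall>z\<in>U. (\<phi> has_derivative blinfun_apply (D z)) (at z)))"

definition C3_on :: "'a::real_normed_vector set \<Rightarrow> ('a \<Rightarrow> 'b::real_normed_vector) \<Rightarrow> bool" where
  "C3_on U \<phi> \<longleftrightarrow> (\<exists>D. C2_on U D \<and> (\<forall>z\<in>U. (\<phi> has_derivative blinfun_apply (D z)) (at z)))"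

definition gradx :: "('x::euclidean_space \<times> 'y::euclidean_space \<Rightarrow> real) \<Rightarrow> 'x \<times> 'y \<Rightarrow> 'x" where
  "gradx \<phi> z = (\<Sum>b\<in>Basis. frechet_derivative \<phi> (at z) (b, 0) *\<^sub>R b)"

definition grady :: "('x::euclidean_space \<times> 'y::euclidean_space \<Rightarrow> real) \<Rightarrow> 'x \<times> 'y \<Rightarrow> 'y" where
  "grady \<phi> z = (\<Sum>b\<in>Basis. frechet_derivative \<phi> (at z) (0, b) *\<^sub>R b)"

definition Lag :: "('x \<times> 'y \<Rightarrow> real) \<Rightarrow> (nat \<Rightarrow> 'x \<times> 'y \<Rightarrow> real) \<Rightarrow> (nat \<Rightarrow> 'x \<times> 'y \<Rightarrow> real)
    \<Rightarrow> nat \<Rightarrow> nat \<Rightarrow> (nat \<Rightarrow> real) \<Rightarrow> (nat \<Rightarrow> real) \<Rightarrow> 'x \<times> 'y \<Rightarrow> real" where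
  "Lag f h g r s \<mu> \<xi> z = f z + (\<Sum>i<r. \<mu> i * h i z) + (\<Sum>i<s. \<xi> i * g i z)"

definition Hyy :: "('x::euclidean_space \<times> 'y::euclidean_space \<Rightarrow> real) \<Rightarrow> (nat \<Rightarrow> 'x \<times> 'y \<Rightarrow> real)
    \<Rightarrow> (nat \<Rightarrow> 'x \<times> 'y \<Rightarrow> real) \<Rightarrow> nat \<Rightarrow> nat \<Rightarrow> (nat \<Rightarrow> real) \<Rightarrow> (nat \<Rightarrow> real) \<Rightarrow> 'x \<times> 'y \<Rightarrow> 'y \<Rightarrow> 'y" where
  "Hyy f h g r s \<mu> \<xi> z dy = frechet_derivative (grady (Lag f h g r s \<mu> \<xi>)) (at z) (0, dy)"

definition Hyx :: "('x::euclidean_space \<times> 'y::euclidean_space \<Rightarrow> real) \<Rightarrow> (nat \<Rightarrow> 'x \<times> 'y \<Rightarrow> real)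
    \<Rightarrow> (nat \<Rightarrow> 'x \<times> 'y \<Rightarrow> real) \<Rightarrow> nat \<Rightarrow> nat \<Rightarrow> (nat \<Rightarrow> real) \<Rightarrow> (nat \<Rightarrow> real) \<Rightarrow> 'x \<times> 'y \<Rightarrow> 'x \<Rightarrow> 'y" where
  "Hyx f h g r s \<mu> \<xi> z dx = frechet_derivative (grady (Lag f h g r s \<mu> \<xi>)) (at z) (dx, 0)"

definition lower_KKT :: "('x::euclidean_space \<times> 'y::euclidean_space \<Rightarrow> real) \<Rightarrow> (nat \<Rightarrow> 'x \<times> 'y \<Rightarrow> real)
    \<Rightarrow> (nat \<Rightarrow> 'x \<times> 'y \<Rightarrow> real) \<Rightarrow> nat \<Rightarrow> nat \<Rightarrow> 'x \<times> 'y \<Rightarrow> (nat \<Rightarrow> real) \<Rightarrow> (nat \<Rightarrow> real) \<Rightarrow> bool" where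
  "lower_KKT f h g r s z \<mu> \<xi> \<longleftrightarrow>
     grady (Lag f h g r s \<mu> \<xi>) z = 0 \<and> (\<forall>i<r. h i z = 0) \<and>
     (\<forall>i<s. 0 \<le> \<xi> i \<and> g i z \<le> 0 \<and> \<xi> i * g i z = 0)"

definition SSOSC :: "('x::euclidean_space \<times> 'y::euclidean_space \<Rightarrow> real) \<Rightarrow> (nat \<Rightarrow> 'x \<times> 'y \<Rightarrow> real)
    \<Rightarrow> (nat \<Rightarrow> 'x \<times> 'y \<Rightarrow> real) \<Rightarrow> nat \<Rightarrow> nat \<Rightarrow> 'x \<times> 'y \<Rightarrow> bool" where
  "SSOSC f h g r s z \<longleftrightarrow>
     (\<forall>\<mu> \<xi>. lower_KKT f h g r s z \<mu> \<xi> \<longrightarrow>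
        (\<forall>dy. dy \<noteq> 0 \<and> (\<forall>i<r. grady (h i) z \<bullet> dy = 0) \<and>
              (\<forall>i<s. g i z = 0 \<and> \<xi> i > 0 \<longrightarrow> grady (g i) z \<bullet> dy = 0)
           \<longrightarrow> dy \<bullet> Hyy f h g r s \<mu> \<xi> z dy > 0))"

definition LICQ :: "(nat \<Rightarrow> 'x::euclidean_space \<times> 'y::euclidean_space \<Rightarrow> real)
    \<Rightarrow> (nat \<Rightarrow> 'x \<times> 'y \<Rightarrow> real) \<Rightarrow> nat \<Rightarrow> nat \<Rightarrow> 'x \<times> 'y \<Rightarrow> bool" where
  "LICQ h g r s z \<longleftrightarrow>
     (\<forall>a b. (\<Sum>i<r. a i *\<^sub>R grady (h i) z) + (\<Sum>i\<in>{i. i < s \<and> g i z = 0}. b i *\<^sub>R grady (g i) z) = 0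
        \<longrightarrow> (\<forall>i<r. a i = 0) \<and> (\<forall>i<s. g i z = 0 \<longrightarrow> b i = 0))"

text \<open>W = diag(w) belongs to the Clarke Jacobian of Pi at g(z) + xi.\<close>
definition clarkeW :: "(nat \<Rightarrow> 'a \<Rightarrow> real) \<Rightarrow> nat \<Rightarrow> 'a \<Rightarrow> (nat \<Rightarrow> real) \<Rightarrow> (nat \<Rightarrow> real) \<Rightarrow> bool" where
  "clarkeW g s z \<xi> w \<longleftrightarrow>
     (\<forall>i<s. (g i z + \<xi> i < 0 \<longrightarrow> w i = 1) \<and> (g i z + \<xi> i > 0 \<longrightarrow> w i = 0) \<and>
            (g i z + \<xi> i = 0 \<longrightarrow> 0 \<le> w i \<and> w i \<le> 1))"

definition AW_system :: "('x::euclidean_space \<times> 'y::euclidean_space \<Rightarrow> real) \<Rightarrow> (nat \<Rightarrow> 'x \<times> 'y \<Rightarrow> real)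
    \<Rightarrow> (nat \<Rightarrow> 'x \<times> 'y \<Rightarrow> real) \<Rightarrow> nat \<Rightarrow> nat \<Rightarrow> 'x \<times> 'y \<Rightarrow> (nat \<Rightarrow> real) \<Rightarrow> (nat \<Rightarrow> real)
    \<Rightarrow> (nat \<Rightarrow> real) \<Rightarrow> 'x \<Rightarrow> 'y \<Rightarrow> (nat \<Rightarrow> real) \<Rightarrow> (nat \<Rightarrow> real) \<Rightarrow> bool" where
  "AW_system f h g r s z \<mu> \<xi> w dx dy d\<mu> d\<xi> \<longleftrightarrow>
     Hyy f h g r s \<mu> \<xi> z dy + (\<Sum>i<r. d\<mu> i *\<^sub>R grady (h i) z) + (\<Sum>i<s. d\<xi> i *\<^sub>R grady (g i) z)
        = Hyx f h g r s \<mu> \<xi> z dx \<and>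
     (\<forall>i<r. grady (h i) z \<bullet> dy = gradx (h i) z \<bullet> dx) \<and>
     (\<forall>i<s. (1 - w i) * (grady (g i) z \<bullet> dy) - w i * d\<xi> i = (1 - w i) * (gradx (g i) z \<bullet> dx))"

text \<open>[I_m 0 0] H(W) dx, i.e. the y-block of A(W)^{-1} B dx.\<close>
definition HWy :: "('x::euclidean_space \<times> 'y::euclidean_space \<Rightarrow> real) \<Rightarrow> (nat \<Rightarrow> 'x \<times> 'y \<Rightarrow> real)
    \<Rightarrow> (nat \<Rightarrow> 'x \<times> 'y \<Rightarrow> real) \<Rightarrow> nat \<Rightarrow> nat \<Rightarrow> 'x \<times> 'y \<Rightarrow> (nat \<Rightarrow> real) \<Rightarrow> (nat \<Rightarrow> real)
    \<Rightarrow> (nat \<Rightarrow> real) \<Rightarrow> 'x \<Rightarrow> 'y" where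
  "HWy f h g r s z \<mu> \<xi> w dx = (THE dy. \<exists>d\<mu> d\<xi>. AW_system f h g r s z \<mu> \<xi> w dx dy d\<mu> d\<xi>)"

definition GMFCQ_Omega1 :: "('x::euclidean_space \<times> 'y::euclidean_space \<Rightarrow> real) \<Rightarrow> (nat \<Rightarrow> 'x \<times> 'y \<Rightarrow> real)
    \<Rightarrow> (nat \<Rightarrow> 'x \<times> 'y \<Rightarrow> real) \<Rightarrow> (nat \<Rightarrow> 'x \<times> 'y \<Rightarrow> real) \<Rightarrow> (nat \<Rightarrow> 'x \<times> 'y \<Rightarrow> real)
    \<Rightarrow> nat \<Rightarrow> nat \<Rightarrow> nat \<Rightarrow> nat \<Rightarrow> 'x \<times> 'y \<Rightarrow> (nat \<Rightarrow> real) \<Rightarrow> (nat \<Rightarrow> real) \<Rightarrow> bool" where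
  "GMFCQ_Omega1 f h g H G r s p q z \<mu> \<xi> \<longleftrightarrow>
     (\<forall>w. clarkeW g s z \<xi> w \<longrightarrow>
        (\<forall>c. (\<forall>dx. (\<Sum>i<p. c i * (gradx (H i) z \<bullet> dx - grady (H i) z \<bullet> HWy f h g r s z \<mu> \<xi> w dx)) = 0)
             \<longrightarrow> (\<forall>i<p. c i = 0)) \<and>
        (\<exists>dx. (\<forall>i<p. gradx (H i) z \<bullet> dx - grady (H i) z \<bullet> HWy f h g r s z \<mu> \<xi> w dx = 0) \<and>
              (\<forall>i<q. G i z = 0 \<longrightarrow> gradx (G i) z \<bullet> dx - grady (G i) z \<bullet> HWy f h g r s z \<mu> \<xi> w dx < 0)))"

text \<open>Rows of the matrix A of the GMFCQ for Omega_2 applied to d = (dx, dy, dmu, dxi):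
  block 1 (i<p), block 2 (in 'y), block 3 (i<r), block 4 (i<s).\<close>
definition Arow1 :: "(nat \<Rightarrow> 'x::euclidean_space \<times> 'y::euclidean_space \<Rightarrow> real) \<Rightarrow> 'x \<times> 'y \<Rightarrow> nat \<Rightarrow> 'x \<Rightarrow> 'y \<Rightarrow> real" where
  "Arow1 H z i dx dy = gradx (H i) z \<bullet> dx + grady (H i) z \<bullet> dy"

definition Arow2 :: "('x::euclidean_space \<times> 'y::euclidean_space \<Rightarrow> real) \<Rightarrow> (nat \<Rightarrow> 'x \<times> 'y \<Rightarrow> real)
    \<Rightarrow> (nat \<Rightarrow> 'x \<times> 'y \<Rightarrow> real) \<Rightarrow> nat \<Rightarrow> nat \<Rightarrow> 'x \<times> 'y \<Rightarrow> (nat \<Rightarrow> real) \<Rightarrow> (nat \<Rightarrow> real)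
    \<Rightarrow> 'x \<Rightarrow> 'y \<Rightarrow> (nat \<Rightarrow> real) \<Rightarrow> (nat \<Rightarrow> real) \<Rightarrow> 'y" where
  "Arow2 f h g r s z \<mu> \<xi> dx dy d\<mu> d\<xi> =
     Hyx f h g r s \<mu> \<xi> z dx + Hyy f h g r s \<mu> \<xi> z dy
     + (\<Sum>i<r. d\<mu> i *\<^sub>R grady (h i) z) + (\<Sum>i<s. d\<xi> i *\<^sub>R grady (g i) z)"

definition Arow3 :: "(nat \<Rightarrow> 'x::euclidean_space \<times> 'y::euclidean_space \<Rightarrow> real) \<Rightarrow> 'x \<times> 'y \<Rightarrow> nat \<Rightarrow> 'x \<Rightarrow> 'y \<Rightarrow> real" where
  "Arow3 h z i dx dy = gradx (h i) z \<bullet> dx + grady (h i) z \<bullet> dy"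

definition Arow4 :: "(nat \<Rightarrow> 'x::euclidean_space \<times> 'y::euclidean_space \<Rightarrow> real) \<Rightarrow> 'x \<times> 'y \<Rightarrow> (nat \<Rightarrow> real)
    \<Rightarrow> nat \<Rightarrow> 'x \<Rightarrow> 'y \<Rightarrow> (nat \<Rightarrow> real) \<Rightarrow> real" where
  "Arow4 g z w i dx dy d\<xi> = (1 - w i) * (gradx (g i) z \<bullet> dx) + (1 - w i) * (grady (g i) z \<bullet> dy) - w i * d\<xi> i"

definition GMFCQ_Omega2 :: "('x::euclidean_space \<times> 'y::euclidean_space \<Rightarrow> real) \<Rightarrow> (nat \<Rightarrow> 'x \<times> 'y \<Rightarrow> real)
    \<Rightarrow> (nat \<Rightarrow> 'x \<times> 'y \<Rightarrow> real) \<Rightarrow> (nat \<Rightarrow> 'x \<times> 'y \<Rightarrow> real) \<Rightarrow> (nat \<Rightarrow> 'x \<times> 'y \<Rightarrow> real)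
    \<Rightarrow> nat \<Rightarrow> nat \<Rightarrow> nat \<Rightarrow> nat \<Rightarrow> 'x \<times> 'y \<Rightarrow> (nat \<Rightarrow> real) \<Rightarrow> (nat \<Rightarrow> real) \<Rightarrow> bool" where
  "GMFCQ_Omega2 f h g H G r s p q z \<mu> \<xi> \<longleftrightarrow>
     (\<forall>w. clarkeW g s z \<xi> w \<longrightarrow>
        (\<comment> \<open>full row rank: c^T A = 0 implies c = 0\<close>
         \<forall>c1 c2 c3 c4.
           (\<forall>dx dy d\<mu> d\<xi>.
              (\<Sum>i<p. c1 i * Arow1 H z i dx dy) + c2 \<bullet> Arow2 f h g r s z \<mu> \<xi> dx dy d\<mu> d\<xi>
              + (\<Sum>i<r. c3 i * Arow3 h z i dx dy) + (\<Sum>i<s. c4 i * Arow4 g z w i dx dy d\<xi>) = 0)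
           \<longrightarrow> (\<forall>i<p. c1 i = 0) \<and> c2 = 0 \<and> (\<forall>i<r. c3 i = 0) \<and> (\<forall>i<s. c4 i = 0)) \<and>
        (\<exists>dx dy d\<mu> d\<xi>.
           (\<forall>i<p. Arow1 H z i dx dy = 0) \<and> Arow2 f h g r s z \<mu> \<xi> dx dy d\<mu> d\<xi> = 0 \<and>
           (\<forall>i<r. Arow3 h z i dx dy = 0) \<and> (\<forall>i<s. Arow4 g z w i dx dy d\<xi> = 0) \<and>
           (\<forall>i<q. G i z = 0 \<longrightarrow> gradx (G i) z \<bullet> dx + grady (G i) z \<bullet> dy < 0)))"

end

theory Submission
  imports Defs "HOL-Library.Function_Algebras"
begin

instantiation "fun" :: (type, real_vector) real_vector
begin
definition scaleR_fun :: "real \<Rightarrow> ('a \<Rightarrow> 'b) \<Rightarrow> 'a \<Rightarrow> 'b" where "scaleR_fun c f = (\<lambda>x. c *\<^sub>R f x)"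
instance by standard (auto simp: scaleR_fun_def fun_eq_iff algebra_simps)
end

lemma scaleR_fun_apply [simp]: "(c *\<^sub>R f) x = c *\<^sub>R f x"
  by (simp add: scaleR_fun_def)

lemma sum_fun_apply [simp]: "(sum f A) x = (\<Sum>a\<in>A. f a x)"
  by (induction A rule: infinite_finite_induct) auto

lemma inj_surj_on:
  fixes T :: "'a::real_vector \<Rightarrow> 'a"
  assumes lin: "linear T" and sub: "subspace V" and fin: "finite B0" and VB: "V \<subseteq> span B0"
    and TV: "T ` V \<subseteq> V" and inj: "inj_on T V"
  shows "V \<subseteq> T ` V"
proof -
  obtain B where B: "B \<subseteq> V" "independent B" "V \<subseteq> span B" "card B = dim V"
    using basis_exists by blast
  have spanB: "span B = V" by (rule antisym[OF span_minimal[OF B(1) sub] B(3)])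
  have injB: "inj_on T (span B)" using inj unfolding spanB .
  have ind: "independent (T ` B)"
    by (rule linear_independent_injective_image[OF lin B(2) injB])
  have "B \<subseteq> span B0" using B(1) VB by (rule order_trans)
  then have finB: "finite B" using independent_span_bound[OF fin B(2)] by blast
  have card: "card (T ` B) = card B"
    using card_image[OF inj_on_subset[OF inj B(1)]] by simp
  have "V \<subseteq> span (T ` B)"
  proof
    fix v assume v: "v \<in> V"
    show "v \<in> span (T ` B)"
    proof (rule ccontr)
      assume nv: "v \<notin> span (T ` B)"
      have i2: "independent (insert v (T ` B))" using independent_insertI[OF nv ind] .
      have tv: "T ` B \<subseteq> V" by (rule subset_trans[OF image_mono[OF B(1)] TV])
      have sub2: "insert v (T ` B) \<subseteq> span B" using v B(3) tv by (intro insert_subsetI) auto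
      have a: "finite (insert v (T ` B)) \<and> card (insert v (T ` B)) \<le> card B"
        by (rule independent_span_bound[OF finB i2 sub2])
      have b: "v \<notin> T ` B"
      proof
        assume "v \<in> T ` B"
        then have "v \<in> span (T ` B)" by (rule span_base)
        with nv show False by contradiction
      qed
      have "card (insert v (T ` B)) = Suc (card (T ` B))"
        by (rule card_insert_disjoint[OF finite_imageI[OF finB] b])
      then show False using a card by linarith
    qed
  qed
  also have "span (T ` B) = T ` span B" by (rule span_linear_image[OF lin])
  finally show ?thesis unfolding spanB .
qed

definition Vsp :: "nat \<Rightarrow> nat \<Rightarrow> ('y::euclidean_space \<times> (nat \<Rightarrow> real) \<times> (nat \<Rightarrow> real)) set" where
  "Vsp r s = {v. (\<forall>i. r \<le> i \<longrightarrow> fst (snd v) i = 0) \<and> (\<forall>i. s \<le> i \<longrightarrow> snd (snd v) i = 0)}"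

lemma Vsp_subspace: "subspace (Vsp r s)"
  unfolding subspace_def Vsp_def by auto

definition ee :: "nat \<Rightarrow> nat \<Rightarrow> real" where "ee i = (\<lambda>j. if j = i then 1 else 0)"

lemma Vsp_span:
  "Vsp r s \<subseteq> span ((\<lambda>b. (b, 0, 0)) ` Basis \<union> (\<lambda>i. (0, ee i, 0)) ` {..<r} \<union> (\<lambda>i. (0, 0, ee i)) ` {..<s}
     :: ('y::euclidean_space \<times> (nat \<Rightarrow> real) \<times> (nat \<Rightarrow> real)) set)"
  (is "_ \<subseteq> span ?B")
proof
  fix v :: "'y \<times> (nat \<Rightarrow> real) \<times> (nat \<Rightarrow> real)"
  assume v: "v \<in> Vsp r s"
  obtain a m x where vv: "v = (a, m, x)" by (cases v) auto
  have m: "\<And>i. r \<le> i \<Longrightarrow> m i = 0" and x: "\<And>i. s \<le> i \<Longrightarrow> x i = 0" using v vv by (auto simp: Vsp_def)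
  have eq: "v = (\<Sum>b\<in>Basis. (a \<bullet> b) *\<^sub>R (b, 0, 0)) + (\<Sum>i<r. m i *\<^sub>R (0, ee i, 0)) + (\<Sum>i<s. x i *\<^sub>R (0, 0, ee i))"
  proof -
    have 1: "(\<Sum>i<r. m i * ee i j) = m j" for j
    proof -
      have "(\<Sum>i<r. m i * ee i j) = (\<Sum>i<r. if i = j then m j else 0)"
        by (rule sum.cong) (auto simp: ee_def)
      then show ?thesis using m[of j] by simp
    qed
    have 2: "(\<Sum>i<s. x i * ee i j) = x j" for j
    proof -
      have "(\<Sum>i<s. x i * ee i j) = (\<Sum>i<s. if i = j then x j else 0)"
        by (rule sum.cong) (auto simp: ee_def)
      then show ?thesis using x[of j] by simp
    qed
    show ?thesis unfolding vv
      by (simp add: prod_eq_iff fst_sum snd_sum euclidean_representation fun_eq_iff 1 2)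
  qed
  show "v \<in> span ?B"
    unfolding eq
    by (intro span_add span_sum span_scale span_base) auto
qed


lemma sum_ee_scaleR: "j < n \<Longrightarrow> (\<Sum>i<n. ee j i *\<^sub>R (v::nat \<Rightarrow> 'a::real_vector) i) = v j"
proof -
  assume j: "j < n"
  have "(\<Sum>i<n. ee j i *\<^sub>R v i) = (\<Sum>i<n. if i = j then v j else 0)"
    by (rule sum.cong) (auto simp: ee_def)
  then show ?thesis using j by simp
qed

lemma sum_ee_mult: "j < n \<Longrightarrow> (\<Sum>i<n. c i * ee j i) = c j"
proof -
  assume j: "j < n"
  have "(\<Sum>i<n. c i * ee j i) = (\<Sum>i<n. if i = j then c j else 0)"
    by (rule sum.cong) (auto simp: ee_def)
  then show ?thesis using j by simp
qed

locale bil =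
  fixes Q :: "'y::euclidean_space \<Rightarrow> 'y" and P :: "'x::euclidean_space \<Rightarrow> 'y"
    and hy gy Hy Gy :: "nat \<Rightarrow> 'y" and hx gx Hx Gx :: "nat \<Rightarrow> 'x"
    and gv Gv \<xi> :: "nat \<Rightarrow> real" and r s p q :: nat
  assumes linQ: "linear Q" and linP: "linear P"
    and kkt: "\<And>i. i < s \<Longrightarrow> 0 \<le> \<xi> i \<and> gv i \<le> 0 \<and> \<xi> i * gv i = 0"
    and ssosc: "\<And>dy. dy \<noteq> 0 \<Longrightarrow> (\<forall>i<r. hy i \<bullet> dy = 0) \<Longrightarrow>
        (\<forall>i<s. gv i = 0 \<and> \<xi> i > 0 \<longrightarrow> gy i \<bullet> dy = 0) \<Longrightarrow> dy \<bullet> Q dy > 0"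
    and licq: "\<And>a b. (\<Sum>i<r. a i *\<^sub>R hy i) + (\<Sum>i\<in>{i. i < s \<and> gv i = 0}. b i *\<^sub>R gy i) = 0 \<Longrightarrow>
        (\<forall>i<r. a i = 0) \<and> (\<forall>i<s. gv i = 0 \<longrightarrow> b i = 0)"
begin

definition clw :: "(nat \<Rightarrow> real) \<Rightarrow> bool" where
  "clw w \<longleftrightarrow> (\<forall>i<s. (gv i + \<xi> i < 0 \<longrightarrow> w i = 1) \<and> (gv i + \<xi> i > 0 \<longrightarrow> w i = 0) \<and>
            (gv i + \<xi> i = 0 \<longrightarrow> 0 \<le> w i \<and> w i \<le> 1))"

lemma clw_range: "clw w \<Longrightarrow> i < s \<Longrightarrow> 0 \<le> w i \<and> w i \<le> 1"
  unfolding clw_def by (cases "gv i + \<xi> i" "0::real" rule: linorder_cases) auto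

lemma clw_act: "clw w \<Longrightarrow> i < s \<Longrightarrow> w i \<noteq> 1 \<Longrightarrow> gv i = 0"
proof -
  assume w: "clw w" and i: "i < s" and w1: "w i \<noteq> 1"
  show "gv i = 0"
  proof (rule ccontr)
    assume "gv i \<noteq> 0"
    with kkt[OF i] have "gv i < 0" "\<xi> i = 0" by auto
    then have "gv i + \<xi> i < 0" by simp
    with w i w1 show False unfolding clw_def by auto
  qed
qed

lemma clw_pos: "clw w \<Longrightarrow> i < s \<Longrightarrow> gv i = 0 \<Longrightarrow> \<xi> i > 0 \<Longrightarrow> w i = 0"
  unfolding clw_def by auto

definition AWs where
  "AWs w dx dy dm dk \<longleftrightarrow>
     Q dy + (\<Sum>i<r. dm i *\<^sub>R hy i) + (\<Sum>i<s. dk i *\<^sub>R gy i) = P dx \<and>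
     (\<forall>i<r. hy i \<bullet> dy = hx i \<bullet> dx) \<and>
     (\<forall>i<s. (1 - w i) * (gy i \<bullet> dy) - w i * dk i = (1 - w i) * (gx i \<bullet> dx))"

definition HW where "HW w dx = (THE dy. \<exists>dm dk. AWs w dx dy dm dk)"

definition adj where
  "adj w c2 c3 c4 dy dm dk = c2 \<bullet> (Q dy + (\<Sum>i<r. dm i *\<^sub>R hy i) + (\<Sum>i<s. dk i *\<^sub>R gy i))
     + (\<Sum>i<r. c3 i * (hy i \<bullet> dy)) + (\<Sum>i<s. c4 i * ((1 - w i) * (gy i \<bullet> dy) - w i * dk i))"

lemma injA:
  assumes w: "clw w" and e1: "Q dy + (\<Sum>i<r. dm i *\<^sub>R hy i) + (\<Sum>i<s. dk i *\<^sub>R gy i) = 0"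
    and e2: "\<forall>i<r. hy i \<bullet> dy = 0" and e3: "\<forall>i<s. (1 - w i) * (gy i \<bullet> dy) - w i * dk i = 0"
  shows "dy = 0 \<and> (\<forall>i<r. dm i = 0) \<and> (\<forall>i<s. dk i = 0)"
proof -
  have t: "0 \<le> dk i * (gy i \<bullet> dy)" if i: "i < s" for i
  proof (cases "w i = 0")
    case True
    then have "gy i \<bullet> dy = 0" using e3 i by auto
    then show ?thesis by simp
  next
    case False
    then have wp: "w i > 0" using clw_range[OF w i] by auto
    have "w i * (dk i * (gy i \<bullet> dy)) = (1 - w i) * (gy i \<bullet> dy)^2"
    proof -
      have "w i * dk i = (1 - w i) * (gy i \<bullet> dy)" using e3 i by auto
      then have "w i * dk i * (gy i \<bullet> dy) = (1 - w i) * (gy i \<bullet> dy) * (gy i \<bullet> dy)" by simp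
      then show ?thesis by (simp add: power2_eq_square mult.assoc)
    qed
    moreover have "0 \<le> (1 - w i) * (gy i \<bullet> dy)^2" using clw_range[OF w i] by simp
    ultimately have "0 \<le> w i * (dk i * (gy i \<bullet> dy))" by simp
    then show ?thesis using wp by (simp add: zero_le_mult_iff)
  qed
  have "0 = dy \<bullet> (Q dy + (\<Sum>i<r. dm i *\<^sub>R hy i) + (\<Sum>i<s. dk i *\<^sub>R gy i))" using e1 by simp
  also have "\<dots> = dy \<bullet> Q dy + (\<Sum>i<r. dm i * (hy i \<bullet> dy)) + (\<Sum>i<s. dk i * (gy i \<bullet> dy))"
    by (simp add: inner_add_right inner_sum_right inner_commute)
  also have "(\<Sum>i<r. dm i * (hy i \<bullet> dy)) = 0" using e2 by simp
  finally have "dy \<bullet> Q dy = - (\<Sum>i<s. dk i * (gy i \<bullet> dy))" by simp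
  moreover have "0 \<le> (\<Sum>i<s. dk i * (gy i \<bullet> dy))" by (rule sum_nonneg) (simp add: t)
  ultimately have qle: "dy \<bullet> Q dy \<le> 0" by simp
  have dy0: "dy = 0"
  proof (rule ccontr)
    assume "dy \<noteq> 0"
    moreover have "\<forall>i<s. gv i = 0 \<and> \<xi> i > 0 \<longrightarrow> gy i \<bullet> dy = 0"
      using e3 clw_pos[OF w] by auto
    ultimately have "dy \<bullet> Q dy > 0" using ssosc e2 by blast
    with qle show False by simp
  qed
  have wdk: "w i * dk i = 0" if "i < s" for i using e3 that dy0 by auto
  have dk_in: "dk i = 0" if "i < s" "gv i \<noteq> 0" for i
  proof -
    have "w i = 1" using clw_act[OF w that(1)] that(2) by blast
    then show ?thesis using wdk[OF that(1)] by simp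
  qed
  have "(\<Sum>i<s. dk i *\<^sub>R gy i) = (\<Sum>i\<in>{i. i < s \<and> gv i = 0}. dk i *\<^sub>R gy i)"
    by (rule sum.mono_neutral_right) (auto simp: dk_in)
  then have "(\<Sum>i<r. dm i *\<^sub>R hy i) + (\<Sum>i\<in>{i. i < s \<and> gv i = 0}. dk i *\<^sub>R gy i) = 0"
    using e1 dy0 by (simp add: linear_0[OF linQ])
  from licq[OF this] have "(\<forall>i<r. dm i = 0) \<and> (\<forall>i<s. gv i = 0 \<longrightarrow> dk i = 0)" .
  then show ?thesis using dy0 dk_in by blast
qed


lemma AWs_uniq:
  assumes w: "clw w" and a1: "AWs w dx y1 m1 k1" and a2: "AWs w dx y2 m2 k2"
  shows "y1 = y2"
proof -
  have "Q (y1 - y2) + (\<Sum>i<r. (m1 i - m2 i) *\<^sub>R hy i) + (\<Sum>i<s. (k1 i - k2 i) *\<^sub>R gy i) =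
     (Q y1 + (\<Sum>i<r. m1 i *\<^sub>R hy i) + (\<Sum>i<s. k1 i *\<^sub>R gy i)) - (Q y2 + (\<Sum>i<r. m2 i *\<^sub>R hy i) + (\<Sum>i<s. k2 i *\<^sub>R gy i))"
    by (simp add: linear_diff[OF linQ] scaleR_diff_left sum_subtractf algebra_simps)
  also have "\<dots> = 0" using a1 a2 by (simp add: AWs_def)
  finally have e1: "Q (y1 - y2) + (\<Sum>i<r. (m1 i - m2 i) *\<^sub>R hy i) + (\<Sum>i<s. (k1 i - k2 i) *\<^sub>R gy i) = 0" .
  have e2: "\<forall>i<r. hy i \<bullet> (y1 - y2) = 0" using a1 a2 by (simp add: AWs_def inner_diff_right)
  have e3: "\<forall>i<s. (1 - w i) * (gy i \<bullet> (y1 - y2)) - w i * (k1 i - k2 i) = 0"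
  proof (intro allI impI)
    fix i assume i: "i < s"
    then have "(1 - w i) * (gy i \<bullet> y1) - w i * k1 i = (1 - w i) * (gy i \<bullet> y2) - w i * k2 i"
      using a1 a2 by (simp add: AWs_def)
    then show "(1 - w i) * (gy i \<bullet> (y1 - y2)) - w i * (k1 i - k2 i) = 0"
      by (simp add: inner_diff_right algebra_simps)
  qed
  from injA[OF w e1 e2 e3] show ?thesis by simp
qed

lemma HW_ex:
  assumes w: "clw w" and ex: "\<exists>dy dm dk. AWs w dx dy dm dk"
  shows "\<exists>dm dk. AWs w dx (HW w dx) dm dk"
proof -
  have "\<exists>!dy. \<exists>dm dk. AWs w dx dy dm dk"
  proof (rule ex_ex1I)
    show "\<exists>dy dm dk. AWs w dx dy dm dk" by (rule ex)
  next
    fix y1 y2 assume "\<exists>dm dk. AWs w dx y1 dm dk" "\<exists>dm dk. AWs w dx y2 dm dk"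
    then obtain m1 k1 m2 k2 where "AWs w dx y1 m1 k1" "AWs w dx y2 m2 k2" by blast
    then show "y1 = y2" by (rule AWs_uniq[OF w])
  qed
  then show ?thesis unfolding HW_def by (rule theI')
qed

lemma adj_inj:
  assumes w: "clw w" and z: "\<And>dy dm dk. adj w c2 c3 c4 dy dm dk = 0"
  shows "c2 = 0 \<and> (\<forall>i<r. c3 i = 0) \<and> (\<forall>i<s. c4 i = 0)"
proof -
  have ch: "hy j \<bullet> c2 = 0" if j: "j < r" for j
  proof -
    have "adj w c2 c3 c4 0 (ee j) (\<lambda>_. 0) = c2 \<bullet> hy j"
      by (simp add: adj_def linear_0[OF linQ] sum_ee_scaleR[OF j])
    then show ?thesis using z by (simp add: inner_commute)
  qed
  have cg: "gy j \<bullet> c2 = c4 j * w j" if j: "j < s" for j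
  proof -
    have s1: "(\<Sum>i<s. c4 i * ((1 - w i) * (gy i \<bullet> 0) - w i * ee j i)) = - (c4 j * w j)"
    proof -
      have "(\<Sum>i<s. c4 i * ((1 - w i) * (gy i \<bullet> 0) - w i * ee j i)) = (\<Sum>i<s. (- (c4 i * w i)) * ee j i)"
        by (rule sum.cong) auto
      also have "\<dots> = - (c4 j * w j)" by (rule sum_ee_mult[OF j])
      finally show ?thesis .
    qed
    have "adj w c2 c3 c4 0 (\<lambda>_. 0) (ee j) = c2 \<bullet> gy j - c4 j * w j"
      unfolding adj_def s1 by (simp add: linear_0[OF linQ] sum_ee_scaleR[OF j])
    then show ?thesis using z by (simp add: inner_commute)
  qed
  have nn: "0 \<le> (\<Sum>i<s. c4 i * ((1 - w i) * (gy i \<bullet> c2) - w i * 0))"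
  proof (rule sum_nonneg)
    fix i assume "i \<in> {..<s}"
    then have i: "i < s" by simp
    have "c4 i * ((1 - w i) * (gy i \<bullet> c2) - w i * 0) = (1 - w i) * w i * (c4 i)^2"
      by (simp add: cg[OF i] power2_eq_square algebra_simps)
    also have "\<dots> \<ge> 0" using clw_range[OF w i] by simp
    finally show "0 \<le> c4 i * ((1 - w i) * (gy i \<bullet> c2) - w i * 0)" .
  qed
  have "adj w c2 c3 c4 c2 (\<lambda>_. 0) (\<lambda>_. 0) = c2 \<bullet> Q c2 + (\<Sum>i<s. c4 i * ((1 - w i) * (gy i \<bullet> c2) - w i * 0))"
    by (simp add: adj_def ch)
  then have qle: "c2 \<bullet> Q c2 \<le> 0" using z nn by simp
  have c20: "c2 = 0"
  proof (rule ccontr)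
    assume ne: "c2 \<noteq> 0"
    have "\<forall>i<s. gv i = 0 \<and> \<xi> i > 0 \<longrightarrow> gy i \<bullet> c2 = 0"
      using cg clw_pos[OF w] by auto
    moreover have "\<forall>i<r. hy i \<bullet> c2 = 0" using ch by auto
    ultimately have "c2 \<bullet> Q c2 > 0" using ssosc[OF ne] by simp
    with qle show False by simp
  qed
  have c4w: "c4 j * w j = 0" if "j < s" for j using cg[OF that] c20 by simp
  define v where "v = (\<Sum>i<r. c3 i *\<^sub>R hy i) + (\<Sum>i<s. (c4 i * (1 - w i)) *\<^sub>R gy i)"
  have vu: "v \<bullet> u = (\<Sum>i<r. c3 i * (hy i \<bullet> u)) + (\<Sum>i<s. c4 i * ((1 - w i) * (gy i \<bullet> u)))" for u
    unfolding v_def by (simp add: inner_add_left inner_sum_left mult.assoc)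
  have au: "adj w c2 c3 c4 u (\<lambda>_. 0) (\<lambda>_. 0) = (\<Sum>i<r. c3 i * (hy i \<bullet> u)) + (\<Sum>i<s. c4 i * ((1 - w i) * (gy i \<bullet> u)))" for u
    by (simp add: adj_def c20)
  have "adj w c2 c3 c4 v (\<lambda>_. 0) (\<lambda>_. 0) = v \<bullet> v" using vu[of v] au[of v] by simp
  then have "v = 0" using z by simp
  moreover have "(\<Sum>i<s. (c4 i * (1 - w i)) *\<^sub>R gy i) = (\<Sum>i\<in>{i. i < s \<and> gv i = 0}. (c4 i * (1 - w i)) *\<^sub>R gy i)"
  proof (rule sum.mono_neutral_right)
    show "\<forall>i\<in>{..<s} - {i. i < s \<and> gv i = 0}. (c4 i * (1 - w i)) *\<^sub>R gy i = 0"
      using clw_act[OF w] by fastforce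
  qed auto
  ultimately have "(\<Sum>i<r. c3 i *\<^sub>R hy i) + (\<Sum>i\<in>{i. i < s \<and> gv i = 0}. (c4 i * (1 - w i)) *\<^sub>R gy i) = 0"
    unfolding v_def by simp
  from licq[OF this] have l1: "\<forall>i<r. c3 i = 0" and l2: "\<forall>i<s. gv i = 0 \<longrightarrow> c4 i * (1 - w i) = 0" by auto
  have "c4 i = 0" if i: "i < s" for i
  proof (cases "gv i = 0")
    case True
    then have "c4 i * (1 - w i) = 0" using l2 i by simp
    moreover have "c4 i * w i = 0" using c4w[OF i] .
    ultimately show ?thesis by (simp add: algebra_simps)
  next
    case False
    then have "w i = 1" using clw_act[OF w i] by blast
    then show ?thesis using c4w[OF i] by simp
  qed
  then show ?thesis using c20 l1 by blast
qed


definition TA :: "(nat \<Rightarrow> real) \<Rightarrow> 'y \<times> (nat \<Rightarrow> real) \<times> (nat \<Rightarrow> real) \<Rightarrow> 'y \<times> (nat \<Rightarrow> real) \<times> (nat \<Rightarrow> real)" where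
  "TA w v = (Q (fst v) + (\<Sum>i<r. fst (snd v) i *\<^sub>R hy i) + (\<Sum>i<s. snd (snd v) i *\<^sub>R gy i),
            \<lambda>i. if i < r then hy i \<bullet> fst v else 0,
            \<lambda>i. if i < s then (1 - w i) * (gy i \<bullet> fst v) - w i * snd (snd v) i else 0)"

lemma TA_lin: "linear (TA w)"
proof (rule linearI)
  fix a b :: "'y \<times> (nat \<Rightarrow> real) \<times> (nat \<Rightarrow> real)"
  show "TA w (a + b) = TA w a + TA w b"
    by (simp add: TA_def prod_eq_iff fun_eq_iff linear_add[OF linQ] sum.distrib scaleR_add_left inner_add_right algebra_simps)
next
  fix c :: real and a :: "'y \<times> (nat \<Rightarrow> real) \<times> (nat \<Rightarrow> real)"
  show "TA w (c *\<^sub>R a) = c *\<^sub>R TA w a"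
    by (simp add: TA_def prod_eq_iff fun_eq_iff linear_scale[OF linQ] scaleR_right.sum scaleR_add_right algebra_simps)
qed

lemma exA:
  assumes w: "clw w"
  shows "\<exists>dy dm dk. AWs w dx dy dm dk"
proof -
  have inj: "inj_on (TA w) (Vsp r s)"
  proof (rule inj_onI)
    fix a b assume a: "a \<in> Vsp r s" and b: "b \<in> Vsp r s" and e: "TA w a = TA w b"
    have z: "TA w (a - b) = 0" using e by (simp add: linear_diff[OF TA_lin])
    define d where "d = a - b"
    have z1: "Q (fst d) + (\<Sum>i<r. fst (snd d) i *\<^sub>R hy i) + (\<Sum>i<s. snd (snd d) i *\<^sub>R gy i) = 0"
      using arg_cong[OF z, of fst] by (simp add: TA_def d_def)
    have z2: "\<forall>i<r. hy i \<bullet> fst d = 0"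
    proof (intro allI impI)
      fix i assume i: "i < r"
      show "hy i \<bullet> fst d = 0" using fun_cong[OF arg_cong[OF z, of "\<lambda>v. fst (snd v)"], of i] i
        by (simp add: TA_def d_def)
    qed
    have z3: "\<forall>i<s. (1 - w i) * (gy i \<bullet> fst d) - w i * snd (snd d) i = 0"
    proof (intro allI impI)
      fix i assume i: "i < s"
      show "(1 - w i) * (gy i \<bullet> fst d) - w i * snd (snd d) i = 0"
        using fun_cong[OF arg_cong[OF z, of "\<lambda>v. snd (snd v)"], of i] i
        by (simp add: TA_def d_def)
    qed
    have r: "fst d = 0 \<and> (\<forall>i<r. fst (snd d) i = 0) \<and> (\<forall>i<s. snd (snd d) i = 0)"
      by (rule injA[OF w z1 z2 z3])
    have "d \<in> Vsp r s" unfolding d_def by (rule subspace_diff[OF Vsp_subspace a b])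
    then have v1: "\<forall>i\<ge>r. fst (snd d) i = 0" and v2: "\<forall>i\<ge>s. snd (snd d) i = 0" by (auto simp: Vsp_def)
    have "fst (snd d) = 0"
    proof (rule ext)
      fix i show "fst (snd d) i = 0 i" using r v1 by (cases "i < r") auto
    qed
    moreover have "snd (snd d) = 0"
    proof (rule ext)
      fix i show "snd (snd d) i = 0 i" using r v2 by (cases "i < s") auto
    qed
    ultimately have c34: "fst (snd d) = 0" "snd (snd d) = 0" by auto
    have "d = 0"
    proof (rule prod_eqI)
      show "fst d = fst 0" using r by simp
      show "snd d = snd 0"
      proof (rule prod_eqI)
        show "fst (snd d) = fst (snd 0)" using c34 by simp
        show "snd (snd d) = snd (snd 0)" using c34 by simp
      qed
    qed
    then show "a = b" unfolding d_def by simp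
  qed
  have TV: "TA w ` Vsp r s \<subseteq> Vsp r s" by (auto simp: TA_def Vsp_def)
  have sur: "Vsp r s \<subseteq> TA w ` Vsp r s"
    by (rule inj_surj_on[OF TA_lin Vsp_subspace _ Vsp_span TV inj]) simp
  have mem: "(P dx, \<lambda>i. if i < r then hx i \<bullet> dx else 0, \<lambda>i. if i < s then (1 - w i) * (gx i \<bullet> dx) else 0) \<in> Vsp r s"
    by (simp add: Vsp_def)
  obtain v where v0: "(P dx, \<lambda>i. if i < r then hx i \<bullet> dx else 0, \<lambda>i. if i < s then (1 - w i) * (gx i \<bullet> dx) else 0) = TA w v"
    using subsetD[OF sur mem] by (rule imageE)
  note v = v0[symmetric]
  have "AWs w dx (fst v) (fst (snd v)) (snd (snd v))"
    unfolding AWs_def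
  proof (intro conjI allI impI)
    show "Q (fst v) + (\<Sum>i<r. fst (snd v) i *\<^sub>R hy i) + (\<Sum>i<s. snd (snd v) i *\<^sub>R gy i) = P dx"
      using arg_cong[OF v, of fst] by (simp add: TA_def)
  next
    fix i assume i: "i < r"
    show "hy i \<bullet> fst v = hx i \<bullet> dx"
      using fun_cong[OF arg_cong[OF v, of "\<lambda>v. fst (snd v)"], of i] i by (simp add: TA_def)
  next
    fix i assume i: "i < s"
    show "(1 - w i) * (gy i \<bullet> fst v) - w i * snd (snd v) i = (1 - w i) * (gx i \<bullet> dx)"
      using fun_cong[OF arg_cong[OF v, of "\<lambda>v. snd (snd v)"], of i] i by (simp add: TA_def)
  qed
  then show ?thesis by (intro exI)
qed

definition Qt :: "'y \<Rightarrow> 'y" where "Qt c = (\<Sum>b\<in>Basis. (c \<bullet> Q b) *\<^sub>R b)"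

lemma Qt_lin: "linear Qt"
  unfolding Qt_def[abs_def]
  by (intro linear_compose_sum ballI) (simp_all add: linear_iff inner_add_left scaleR_add_left)

lemma Qt_inner: "Qt c \<bullet> dy = c \<bullet> Q dy"
proof -
  have "Q dy = Q (\<Sum>b\<in>Basis. (dy \<bullet> b) *\<^sub>R b)" by (simp add: euclidean_representation)
  also have "\<dots> = (\<Sum>b\<in>Basis. (dy \<bullet> b) *\<^sub>R Q b)" by (simp add: linear_sum[OF linQ] linear_scale[OF linQ])
  finally have "c \<bullet> Q dy = (\<Sum>b\<in>Basis. (dy \<bullet> b) * (c \<bullet> Q b))" by (simp add: inner_sum_right)
  moreover have "Qt c \<bullet> dy = (\<Sum>b\<in>Basis. (c \<bullet> Q b) * (b \<bullet> dy))" by (simp add: Qt_def inner_sum_left)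
  ultimately show ?thesis by (simp add: inner_commute mult.commute)
qed

definition TB :: "(nat \<Rightarrow> real) \<Rightarrow> 'y \<times> (nat \<Rightarrow> real) \<times> (nat \<Rightarrow> real) \<Rightarrow> 'y \<times> (nat \<Rightarrow> real) \<times> (nat \<Rightarrow> real)" where
  "TB w v = (Qt (fst v) + (\<Sum>i<r. fst (snd v) i *\<^sub>R hy i) + (\<Sum>i<s. (snd (snd v) i * (1 - w i)) *\<^sub>R gy i),
            \<lambda>i. if i < r then hy i \<bullet> fst v else 0,
            \<lambda>i. if i < s then gy i \<bullet> fst v - w i * snd (snd v) i else 0)"

lemma TB_lin: "linear (TB w)"
proof (rule linearI)
  fix a b :: "'y \<times> (nat \<Rightarrow> real) \<times> (nat \<Rightarrow> real)"
  obtain fa ma ka where av: "a = (fa, ma, ka)" by (cases a) auto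
  obtain fb mb kb where bv: "b = (fb, mb, kb)" by (cases b) auto
  have s1: "(\<Sum>i<r. (ma i + mb i) *\<^sub>R hy i) = (\<Sum>i<r. ma i *\<^sub>R hy i) + (\<Sum>i<r. mb i *\<^sub>R hy i)"
    by (simp add: scaleR_add_left sum.distrib)
  have s2: "(\<Sum>i<s. ((ka i + kb i) * (1 - w i)) *\<^sub>R gy i) = (\<Sum>i<s. (ka i * (1 - w i)) *\<^sub>R gy i) + (\<Sum>i<s. (kb i * (1 - w i)) *\<^sub>R gy i)"
    by (simp only: distrib_right scaleR_add_left sum.distrib)
  have f1: "fst (TB w (a + b)) = fst (TB w a) + fst (TB w b)"
    unfolding av bv TB_def by (simp only: fst_conv snd_conv prod.collapse plus_prod_def plus_fun_apply s1 s2 linear_add[OF Qt_lin] add_ac)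
  have f2: "fst (snd (TB w (a + b))) = fst (snd (TB w a)) + fst (snd (TB w b))"
    unfolding av bv TB_def by (simp add: fun_eq_iff inner_add_right)
  have f3: "snd (snd (TB w (a + b))) = snd (snd (TB w a)) + snd (snd (TB w b))"
    unfolding av bv TB_def by (simp add: fun_eq_iff inner_add_right algebra_simps)
  show "TB w (a + b) = TB w a + TB w b"
    using f1 f2 f3 by (simp add: prod_eq_iff)
next
  fix c :: real and a :: "'y \<times> (nat \<Rightarrow> real) \<times> (nat \<Rightarrow> real)"
  show "TB w (c *\<^sub>R a) = c *\<^sub>R TB w a"
    by (simp add: TB_def prod_eq_iff fun_eq_iff linear_scale[OF Qt_lin] scaleR_right.sum scaleR_add_right algebra_simps)
qed

lemma TB_pair:
  "adj w c2 c3 c4 dy dm dk = fst (TB w (c2, c3, c4)) \<bullet> dy + (\<Sum>i<r. fst (snd (TB w (c2, c3, c4))) i * dm i)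
      + (\<Sum>i<s. snd (snd (TB w (c2, c3, c4))) i * dk i)"
proof -
  have A: "(\<Sum>i<r. fst (snd (TB w (c2, c3, c4))) i * dm i) = (\<Sum>i<r. (hy i \<bullet> c2) * dm i)"
    by (rule sum.cong) (auto simp: TB_def)
  have B: "(\<Sum>i<s. snd (snd (TB w (c2, c3, c4))) i * dk i) = (\<Sum>i<s. (gy i \<bullet> c2 - w i * c4 i) * dk i)"
    by (rule sum.cong) (auto simp: TB_def)
  have C: "fst (TB w (c2, c3, c4)) \<bullet> dy = c2 \<bullet> Q dy + (\<Sum>i<r. c3 i * (hy i \<bullet> dy)) + (\<Sum>i<s. (c4 i * (1 - w i)) * (gy i \<bullet> dy))"
    by (simp add: TB_def inner_add_left inner_sum_left Qt_inner)
  have G: "(\<Sum>i<s. (c4 i * (1 - w i)) * (gy i \<bullet> dy)) = (\<Sum>i<s. c4 i * ((1 - w i) * (gy i \<bullet> dy)))"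
    by (simp add: mult.assoc)
  have D: "adj w c2 c3 c4 dy dm dk = c2 \<bullet> Q dy + (\<Sum>i<r. dm i * (c2 \<bullet> hy i)) + (\<Sum>i<s. dk i * (c2 \<bullet> gy i))
      + (\<Sum>i<r. c3 i * (hy i \<bullet> dy)) + ((\<Sum>i<s. c4 i * ((1 - w i) * (gy i \<bullet> dy))) - (\<Sum>i<s. c4 i * (w i * dk i)))"
    by (simp add: adj_def inner_add_right inner_sum_right right_diff_distrib sum_subtractf)
  have E: "(\<Sum>i<s. (gy i \<bullet> c2 - w i * c4 i) * dk i) = (\<Sum>i<s. dk i * (c2 \<bullet> gy i)) - (\<Sum>i<s. c4 i * (w i * dk i))"
  proof -
    have "(\<Sum>i<s. (gy i \<bullet> c2 - w i * c4 i) * dk i) = (\<Sum>i<s. dk i * (c2 \<bullet> gy i) - c4 i * (w i * dk i))"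
      by (rule sum.cong) (auto simp: inner_commute algebra_simps)
    then show ?thesis by (simp add: sum_subtractf)
  qed
  have F: "(\<Sum>i<r. (hy i \<bullet> c2) * dm i) = (\<Sum>i<r. dm i * (c2 \<bullet> hy i))"
    by (simp add: inner_commute mult.commute)
  show ?thesis unfolding A B C D E F G by simp
qed

lemma exAdj:
  assumes w: "clw w"
  shows "\<exists>c2 c3 c4. \<forall>dy dm dk. adj w c2 c3 c4 dy dm dk = u \<bullet> dy"
proof -
  have inj: "inj_on (TB w) (Vsp r s)"
  proof (rule inj_onI)
    fix a b assume a: "a \<in> Vsp r s" and b: "b \<in> Vsp r s" and e: "TB w a = TB w b"
    have z: "TB w (a - b) = 0" using e by (simp add: linear_diff[OF TB_lin])
    define d where "d = a - b"
    obtain c2 c3 c4 where dd: "d = (c2, c3, c4)" by (cases d) auto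
    have "adj w c2 c3 c4 dy dm dk = 0" for dy dm dk
      using z unfolding TB_pair d_def[symmetric] dd by simp
    then have r: "c2 = 0 \<and> (\<forall>i<r. c3 i = 0) \<and> (\<forall>i<s. c4 i = 0)"
      by (rule adj_inj[OF w])
    have "d \<in> Vsp r s" unfolding d_def by (rule subspace_diff[OF Vsp_subspace a b])
    then have v1: "\<forall>i\<ge>r. c3 i = 0" and v2: "\<forall>i\<ge>s. c4 i = 0" using dd by (auto simp: Vsp_def)
    have "c3 = 0"
    proof (rule ext)
      fix i show "c3 i = 0 i" using r v1 by (cases "i < r") auto
    qed
    moreover have "c4 = 0"
    proof (rule ext)
      fix i show "c4 i = 0 i" using r v2 by (cases "i < s") auto
    qed
    ultimately have c34: "c3 = 0" "c4 = 0" by auto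
    have "d = 0"
    proof (rule prod_eqI)
      show "fst d = fst 0" using dd r by simp
      show "snd d = snd 0"
      proof (rule prod_eqI)
        show "fst (snd d) = fst (snd 0)" using dd c34 by simp
        show "snd (snd d) = snd (snd 0)" using dd c34 by simp
      qed
    qed
    then show "a = b" unfolding d_def by simp
  qed
  have TV: "TB w ` Vsp r s \<subseteq> Vsp r s" by (auto simp: TB_def Vsp_def)
  have sur: "Vsp r s \<subseteq> TB w ` Vsp r s"
    by (rule inj_surj_on[OF TB_lin Vsp_subspace _ Vsp_span TV inj]) simp
  have mem: "(u, 0, 0) \<in> Vsp r s" by (simp add: Vsp_def)
  obtain v where v0: "(u, 0, 0) = TB w v" using subsetD[OF sur mem] by (rule imageE)
  note v = v0[symmetric]
  obtain c2 c3 c4 where vv: "v = (c2, c3, c4)" by (cases v) auto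
  have "adj w c2 c3 c4 dy dm dk = u \<bullet> dy" for dy dm dk
    unfolding TB_pair using v vv by simp
  then show ?thesis by blast
qed


definition G1w where
  "G1w w \<longleftrightarrow>
    (\<forall>c. (\<forall>dx. (\<Sum>i<p. c i * (Hx i \<bullet> dx - Hy i \<bullet> HW w dx)) = 0) \<longrightarrow> (\<forall>i<p. c i = 0)) \<and>
    (\<exists>dx. (\<forall>i<p. Hx i \<bullet> dx - Hy i \<bullet> HW w dx = 0) \<and> (\<forall>i<q. Gv i = 0 \<longrightarrow> Gx i \<bullet> dx - Gy i \<bullet> HW w dx < 0))"

definition EE where
  "EE w c1 c2 c3 c4 dx dy dm dk =
     (\<Sum>i<p. c1 i * (Hx i \<bullet> dx + Hy i \<bullet> dy)) + c2 \<bullet> (P dx + Q dy + (\<Sum>i<r. dm i *\<^sub>R hy i) + (\<Sum>i<s. dk i *\<^sub>R gy i))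
     + (\<Sum>i<r. c3 i * (hx i \<bullet> dx + hy i \<bullet> dy))
     + (\<Sum>i<s. c4 i * ((1 - w i) * (gx i \<bullet> dx) + (1 - w i) * (gy i \<bullet> dy) - w i * dk i))"

definition G2w where
  "G2w w \<longleftrightarrow>
    (\<forall>c1 c2 c3 c4. (\<forall>dx dy dm dk. EE w c1 c2 c3 c4 dx dy dm dk = 0) \<longrightarrow>
        (\<forall>i<p. c1 i = 0) \<and> c2 = 0 \<and> (\<forall>i<r. c3 i = 0) \<and> (\<forall>i<s. c4 i = 0)) \<and>
    (\<exists>dx dy dm dk. (\<forall>i<p. Hx i \<bullet> dx + Hy i \<bullet> dy = 0) \<and>
        P dx + Q dy + (\<Sum>i<r. dm i *\<^sub>R hy i) + (\<Sum>i<s. dk i *\<^sub>R gy i) = 0 \<and>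
        (\<forall>i<r. hx i \<bullet> dx + hy i \<bullet> dy = 0) \<and>
        (\<forall>i<s. (1 - w i) * (gx i \<bullet> dx) + (1 - w i) * (gy i \<bullet> dy) - w i * dk i = 0) \<and>
        (\<forall>i<q. Gv i = 0 \<longrightarrow> Gx i \<bullet> dx + Gy i \<bullet> dy < 0))"

definition XX where
  "XX w c1 c2 c3 c4 dx = (\<Sum>i<p. c1 i * (Hx i \<bullet> dx)) + c2 \<bullet> P dx + (\<Sum>i<r. c3 i * (hx i \<bullet> dx))
     + (\<Sum>i<s. c4 i * ((1 - w i) * (gx i \<bullet> dx)))"

lemma EE_split:
  "EE w c1 c2 c3 c4 dx dy dm dk = XX w c1 c2 c3 c4 dx + (\<Sum>i<p. c1 i * (Hy i \<bullet> dy)) + adj w c2 c3 c4 dy dm dk"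
proof -
  have s1: "(\<Sum>i<p. c1 i * (Hx i \<bullet> dx + Hy i \<bullet> dy)) = (\<Sum>i<p. c1 i * (Hx i \<bullet> dx)) + (\<Sum>i<p. c1 i * (Hy i \<bullet> dy))"
    by (simp add: distrib_left sum.distrib)
  have s3: "(\<Sum>i<r. c3 i * (hx i \<bullet> dx + hy i \<bullet> dy)) = (\<Sum>i<r. c3 i * (hx i \<bullet> dx)) + (\<Sum>i<r. c3 i * (hy i \<bullet> dy))"
    by (simp add: distrib_left sum.distrib)
  have s4: "(\<Sum>i<s. c4 i * ((1 - w i) * (gx i \<bullet> dx) + (1 - w i) * (gy i \<bullet> dy) - w i * dk i)) =
      (\<Sum>i<s. c4 i * ((1 - w i) * (gx i \<bullet> dx))) + (\<Sum>i<s. c4 i * ((1 - w i) * (gy i \<bullet> dy) - w i * dk i))"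
  proof -
    have "(\<Sum>i<s. c4 i * ((1 - w i) * (gx i \<bullet> dx) + (1 - w i) * (gy i \<bullet> dy) - w i * dk i)) =
      (\<Sum>i<s. c4 i * ((1 - w i) * (gx i \<bullet> dx)) + c4 i * ((1 - w i) * (gy i \<bullet> dy) - w i * dk i))"
      by (rule sum.cong) (simp_all add: algebra_simps)
    then show ?thesis by (simp only: sum.distrib)
  qed
  have s2: "c2 \<bullet> (P dx + Q dy + (\<Sum>i<r. dm i *\<^sub>R hy i) + (\<Sum>i<s. dk i *\<^sub>R gy i)) =
      c2 \<bullet> P dx + c2 \<bullet> (Q dy + (\<Sum>i<r. dm i *\<^sub>R hy i) + (\<Sum>i<s. dk i *\<^sub>R gy i))"
    by (simp add: inner_add_right)
  show ?thesis unfolding EE_def XX_def adj_def s1 s2 s3 s4 by linarith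
qed

lemma XX_AW:
  assumes aw: "AWs w dx y dm dk"
  shows "XX w c1 c2 c3 c4 dx = (\<Sum>i<p. c1 i * (Hx i \<bullet> dx)) + adj w c2 c3 c4 y dm dk"
proof -
  have e1: "P dx = Q y + (\<Sum>i<r. dm i *\<^sub>R hy i) + (\<Sum>i<s. dk i *\<^sub>R gy i)" using aw by (simp add: AWs_def)
  have e2: "(\<Sum>i<r. c3 i * (hx i \<bullet> dx)) = (\<Sum>i<r. c3 i * (hy i \<bullet> y))"
    by (rule sum.cong) (use aw in \<open>auto simp: AWs_def\<close>)
  have e3: "(\<Sum>i<s. c4 i * ((1 - w i) * (gx i \<bullet> dx))) = (\<Sum>i<s. c4 i * ((1 - w i) * (gy i \<bullet> y) - w i * dk i))"
    by (rule sum.cong) (use aw in \<open>auto simp: AWs_def\<close>)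
  show ?thesis unfolding XX_def adj_def e1 e2 e3 by linarith
qed

lemma XX_0: "XX w c1 c2 c3 c4 0 = 0"
  by (simp add: XX_def linear_0[OF linP])

lemma adj_neg: "adj w c2 c3 c4 (- y) (\<lambda>i. - dm i) (\<lambda>i. - dk i) = - adj w c2 c3 c4 y dm dk"
proof -
  have a: "Q (- y) + (\<Sum>i<r. (- dm i) *\<^sub>R hy i) + (\<Sum>i<s. (- dk i) *\<^sub>R gy i) =
      - (Q y + (\<Sum>i<r. dm i *\<^sub>R hy i) + (\<Sum>i<s. dk i *\<^sub>R gy i))"
    by (simp add: linear_neg[OF linQ] sum_negf)
  have b: "(\<Sum>i<r. c3 i * (hy i \<bullet> - y)) = - (\<Sum>i<r. c3 i * (hy i \<bullet> y))"
    by (simp add: sum_negf)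
  have c: "(\<Sum>i<s. c4 i * ((1 - w i) * (gy i \<bullet> - y) - w i * - dk i)) = - (\<Sum>i<s. c4 i * ((1 - w i) * (gy i \<bullet> y) - w i * dk i))"
    by (simp add: sum_negf[symmetric] algebra_simps)
  show ?thesis unfolding adj_def a b c by (subst inner_minus_right) linarith
qed

lemma G_equiv:
  assumes w: "clw w"
  shows "G1w w \<longleftrightarrow> G2w w"
proof
  assume g1: "G1w w"
  have rk1: "\<And>c. (\<forall>dx. (\<Sum>i<p. c i * (Hx i \<bullet> dx - Hy i \<bullet> HW w dx)) = 0) \<Longrightarrow> (\<forall>i<p. c i = 0)"
    using g1 unfolding G1w_def by blast
  obtain dx0 where dx0: "\<forall>i<p. Hx i \<bullet> dx0 - Hy i \<bullet> HW w dx0 = 0" "\<forall>i<q. Gv i = 0 \<longrightarrow> Gx i \<bullet> dx0 - Gy i \<bullet> HW w dx0 < 0"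
    using g1 unfolding G1w_def by blast
  show "G2w w" unfolding G2w_def
  proof (rule conjI, (rule allI)+, rule impI)
    fix c1 c2 c3 c4
    assume H: "\<forall>dx dy dm dk. EE w c1 c2 c3 c4 dx dy dm dk = 0"
    have "(\<Sum>i<p. c1 i * (Hx i \<bullet> dx - Hy i \<bullet> HW w dx)) = 0" for dx
    proof -
      obtain dm dk where aw: "AWs w dx (HW w dx) dm dk" using HW_ex[OF w exA[OF w]] by blast
      have "EE w c1 c2 c3 c4 dx (- HW w dx) (\<lambda>i. - dm i) (\<lambda>i. - dk i) =
          (\<Sum>i<p. c1 i * (Hx i \<bullet> dx)) + adj w c2 c3 c4 (HW w dx) dm dk + (\<Sum>i<p. c1 i * (Hy i \<bullet> - HW w dx))
          - adj w c2 c3 c4 (HW w dx) dm dk"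
        unfolding EE_split XX_AW[OF aw] adj_neg by simp
      also have "\<dots> = (\<Sum>i<p. c1 i * (Hx i \<bullet> dx - Hy i \<bullet> HW w dx))"
        by (simp add: sum_subtractf right_diff_distrib sum_negf)
      finally show ?thesis using H by simp
    qed
    then have c1: "\<forall>i<p. c1 i = 0" using rk1 by blast
    have "adj w c2 c3 c4 dy dm dk = 0" for dy dm dk
    proof -
      have "EE w c1 c2 c3 c4 0 dy dm dk = adj w c2 c3 c4 dy dm dk"
        unfolding EE_split XX_0 using c1 by simp
      then show ?thesis using H by simp
    qed
    then have "c2 = 0 \<and> (\<forall>i<r. c3 i = 0) \<and> (\<forall>i<s. c4 i = 0)" by (rule adj_inj[OF w])
    then show "(\<forall>i<p. c1 i = 0) \<and> c2 = 0 \<and> (\<forall>i<r. c3 i = 0) \<and> (\<forall>i<s. c4 i = 0)" using c1 by blast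
  next
    obtain dm dk where aw: "AWs w dx0 (HW w dx0) dm dk" using HW_ex[OF w exA[OF w]] by blast
    define y where "y = HW w dx0"
    have aw': "AWs w dx0 y dm dk" using aw by (simp add: y_def)
    show "\<exists>dx dy dm dk. (\<forall>i<p. Hx i \<bullet> dx + Hy i \<bullet> dy = 0) \<and>
        P dx + Q dy + (\<Sum>i<r. dm i *\<^sub>R hy i) + (\<Sum>i<s. dk i *\<^sub>R gy i) = 0 \<and>
        (\<forall>i<r. hx i \<bullet> dx + hy i \<bullet> dy = 0) \<and>
        (\<forall>i<s. (1 - w i) * (gx i \<bullet> dx) + (1 - w i) * (gy i \<bullet> dy) - w i * dk i = 0) \<and>
        (\<forall>i<q. Gv i = 0 \<longrightarrow> Gx i \<bullet> dx + Gy i \<bullet> dy < 0)"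
    proof (intro exI conjI)
      show "\<forall>i<p. Hx i \<bullet> dx0 + Hy i \<bullet> (- y) = 0" using dx0(1) by (simp add: y_def)
      show "\<forall>i<q. Gv i = 0 \<longrightarrow> Gx i \<bullet> dx0 + Gy i \<bullet> (- y) < 0" using dx0(2) by (simp add: y_def)
      have "Q (- y) + (\<Sum>i<r. (- dm i) *\<^sub>R hy i) + (\<Sum>i<s. (- dk i) *\<^sub>R gy i) =
          - (Q y + (\<Sum>i<r. dm i *\<^sub>R hy i) + (\<Sum>i<s. dk i *\<^sub>R gy i))"
        by (simp add: linear_neg[OF linQ] sum_negf)
      also have "\<dots> = - P dx0" using aw' by (simp add: AWs_def)
      finally show "P dx0 + Q (- y) + (\<Sum>i<r. (- dm i) *\<^sub>R hy i) + (\<Sum>i<s. (- dk i) *\<^sub>R gy i) = 0"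
        by (simp add: algebra_simps)
      show "\<forall>i<r. hx i \<bullet> dx0 + hy i \<bullet> (- y) = 0" using aw' by (simp add: AWs_def)
      show "\<forall>i<s. (1 - w i) * (gx i \<bullet> dx0) + (1 - w i) * (gy i \<bullet> (- y)) - w i * (- dk i) = 0"
        using aw' by (simp add: AWs_def algebra_simps)
    qed
  qed
next
  assume g2: "G2w w"
  have rk2: "\<And>c1 c2 c3 c4. (\<forall>dx dy dm dk. EE w c1 c2 c3 c4 dx dy dm dk = 0) \<Longrightarrow> (\<forall>i<p. c1 i = 0)"
    using g2 unfolding G2w_def by blast
  obtain dx dy dm dk where
    k1: "\<forall>i<p. Hx i \<bullet> dx + Hy i \<bullet> dy = 0" and
    k2: "P dx + Q dy + (\<Sum>i<r. dm i *\<^sub>R hy i) + (\<Sum>i<s. dk i *\<^sub>R gy i) = 0" and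
    k3: "\<forall>i<r. hx i \<bullet> dx + hy i \<bullet> dy = 0" and
    k4: "\<forall>i<s. (1 - w i) * (gx i \<bullet> dx) + (1 - w i) * (gy i \<bullet> dy) - w i * dk i = 0" and
    k5: "\<forall>i<q. Gv i = 0 \<longrightarrow> Gx i \<bullet> dx + Gy i \<bullet> dy < 0"
    using g2 unfolding G2w_def by blast
  show "G1w w" unfolding G1w_def
  proof (rule conjI, rule allI, rule impI)
    fix c assume H: "\<forall>dx. (\<Sum>i<p. c i * (Hx i \<bullet> dx - Hy i \<bullet> HW w dx)) = 0"
    define u where "u = - (\<Sum>i<p. c i *\<^sub>R Hy i)"
    obtain c2 c3 c4 where ad: "\<forall>dy dm dk. adj w c2 c3 c4 dy dm dk = u \<bullet> dy" using exAdj[OF w] by blast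
    have uy: "u \<bullet> y = - (\<Sum>i<p. c i * (Hy i \<bullet> y))" for y
      by (simp add: u_def inner_sum_left)
    have "EE w c c2 c3 c4 dx' dy' dm' dk' = 0" for dx' dy' dm' dk'
    proof -
      obtain m k where aw: "AWs w dx' (HW w dx') m k" using HW_ex[OF w exA[OF w]] by blast
      have "EE w c c2 c3 c4 dx' dy' dm' dk' = (\<Sum>i<p. c i * (Hx i \<bullet> dx')) - (\<Sum>i<p. c i * (Hy i \<bullet> HW w dx'))"
        unfolding EE_split XX_AW[OF aw] using ad uy by simp
      also have "\<dots> = (\<Sum>i<p. c i * (Hx i \<bullet> dx' - Hy i \<bullet> HW w dx'))"
        by (simp add: sum_subtractf[symmetric] right_diff_distrib)
      also have "\<dots> = 0" using H by simp
      finally show ?thesis .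
    qed
    then show "\<forall>i<p. c i = 0" using rk2 by blast
  next
    have aw: "AWs w dx (- dy) (\<lambda>i. - dm i) (\<lambda>i. - dk i)"
      unfolding AWs_def
    proof (intro conjI allI impI)
      have "Q (- dy) + (\<Sum>i<r. (- dm i) *\<^sub>R hy i) + (\<Sum>i<s. (- dk i) *\<^sub>R gy i) =
          - (Q dy + (\<Sum>i<r. dm i *\<^sub>R hy i) + (\<Sum>i<s. dk i *\<^sub>R gy i))"
        by (simp add: linear_neg[OF linQ] sum_negf)
      also have "\<dots> = P dx"
      proof -
        have "P dx + (Q dy + (\<Sum>i<r. dm i *\<^sub>R hy i) + (\<Sum>i<s. dk i *\<^sub>R gy i)) = 0"
          using k2 by (simp only: add.assoc)
        then have "P dx = - (Q dy + (\<Sum>i<r. dm i *\<^sub>R hy i) + (\<Sum>i<s. dk i *\<^sub>R gy i))"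
          by (rule eq_neg_iff_add_eq_0[THEN iffD2])
        then show ?thesis by (rule sym)
      qed
      finally show "Q (- dy) + (\<Sum>i<r. (- dm i) *\<^sub>R hy i) + (\<Sum>i<s. (- dk i) *\<^sub>R gy i) = P dx" .
    next
      fix i assume i: "i < r"
      have e: "hx i \<bullet> dx + hy i \<bullet> dy = 0" using k3 i by blast
      show "hy i \<bullet> - dy = hx i \<bullet> dx" unfolding inner_minus_right using e by linarith
    next
      fix i assume "i < s"
      then show "(1 - w i) * (gy i \<bullet> - dy) - w i * - dk i = (1 - w i) * (gx i \<bullet> dx)"
        using k4 by (simp add: algebra_simps)
    qed
    obtain m k where aw2: "AWs w dx (HW w dx) m k" using HW_ex[OF w exA[OF w]] by blast
    have hw: "HW w dx = - dy" by (rule AWs_uniq[OF w aw2 aw])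
    show "\<exists>dx. (\<forall>i<p. Hx i \<bullet> dx - Hy i \<bullet> HW w dx = 0) \<and> (\<forall>i<q. Gv i = 0 \<longrightarrow> Gx i \<bullet> dx - Gy i \<bullet> HW w dx < 0)"
      using k1 k5 hw by (intro exI[of _ dx]) simp
  qed
qed

end


lemma C3_D:
  assumes "C3_on U \<phi>"
  shows "\<exists>D. (\<forall>z\<in>U. (\<phi> has_derivative blinfun_apply (D z)) (at z)) \<and> (\<forall>z\<in>U. D differentiable at z)"
  using assms unfolding C3_on_def C2_on_def C1_on_def differentiable_def by blast

lemma lag_lin:
  assumes U: "open U" "z0 \<in> U" and sf: "C3_on U f" and sh: "\<forall>i<r. C3_on U (h i)"
    and sg: "\<forall>i<s. C3_on U (g i)"
  shows "linear (frechet_derivative (grady (Lag f h g r s \<mu> \<xi>)) (at z0))"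
proof -
  obtain Df where Df: "\<forall>z\<in>U. (f has_derivative blinfun_apply (Df z)) (at z)" "\<forall>z\<in>U. Df differentiable at z"
    using C3_D[OF sf] by blast
  have "\<forall>i. \<exists>D. i < r \<longrightarrow> (\<forall>z\<in>U. (h i has_derivative blinfun_apply (D z)) (at z)) \<and> (\<forall>z\<in>U. D differentiable at z)"
    using C3_D sh by blast
  then obtain Dh where Dh: "\<And>i. i < r \<Longrightarrow> (\<forall>z\<in>U. (h i has_derivative blinfun_apply (Dh i z)) (at z)) \<and> (\<forall>z\<in>U. Dh i differentiable at z)"
    by metis
  have "\<forall>i. \<exists>D. i < s \<longrightarrow> (\<forall>z\<in>U. (g i has_derivative blinfun_apply (D z)) (at z)) \<and> (\<forall>z\<in>U. D differentiable at z)"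
    using C3_D sg by blast
  then obtain Dg where Dg: "\<And>i. i < s \<Longrightarrow> (\<forall>z\<in>U. (g i has_derivative blinfun_apply (Dg i z)) (at z)) \<and> (\<forall>z\<in>U. Dg i differentiable at z)"
    by metis
  define DL where "DL z = Df z + (\<Sum>i<r. \<mu> i *\<^sub>R Dh i z) + (\<Sum>i<s. \<xi> i *\<^sub>R Dg i z)" for z
  have Lag_eq: "Lag f h g r s \<mu> \<xi> = (\<lambda>z. f z + (\<Sum>i<r. \<mu> i * h i z) + (\<Sum>i<s. \<xi> i * g i z))"
    by (rule ext) (simp add: Lag_def)
  have dL: "(Lag f h g r s \<mu> \<xi> has_derivative blinfun_apply (DL z)) (at z)" if "z \<in> U" for z
  proof -
    have "((\<lambda>z. f z + (\<Sum>i<r. \<mu> i * h i z) + (\<Sum>i<s. \<xi> i * g i z)) has_derivative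
       (\<lambda>v. blinfun_apply (Df z) v + (\<Sum>i<r. \<mu> i * blinfun_apply (Dh i z) v) + (\<Sum>i<s. \<xi> i * blinfun_apply (Dg i z) v))) (at z)"
      using that Df Dh Dg
      by (intro has_derivative_add has_derivative_sum has_derivative_mult_right) auto
    moreover have "(\<lambda>v. blinfun_apply (Df z) v + (\<Sum>i<r. \<mu> i * blinfun_apply (Dh i z) v) + (\<Sum>i<s. \<xi> i * blinfun_apply (Dg i z) v))
       = blinfun_apply (DL z)"
      by (rule ext) (simp add: DL_def blinfun.sum_left plus_blinfun.rep_eq scaleR_blinfun.rep_eq)
    ultimately show ?thesis using Lag_eq by simp
  qed
  have DLd: "DL differentiable at z0"
    unfolding DL_def[abs_def] using U Df Dh Dg
    by (intro differentiable_add differentiable_sum ballI differentiable_scaleR differentiable_const) auto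
  define F where "F z = (\<Sum>b\<in>Basis. blinfun_apply (DL z) (0,b) *\<^sub>R b)" for z
  have comp: "(\<lambda>z. blinfun_apply (DL z) (0,b)) differentiable at z0" for b
  proof -
    have "(\<lambda>A. blinfun_apply A (0,b)) \<circ> DL differentiable at z0"
      by (rule differentiable_chain_at[OF DLd bounded_linear_imp_differentiable[OF bounded_linear_apply_blinfun]])
    then show ?thesis by (simp add: o_def)
  qed
  have Fd: "F differentiable at z0"
    unfolding F_def[abs_def]
    by (intro differentiable_sum ballI differentiable_scaleR differentiable_const comp) auto
  have eq: "F z = grady (Lag f h g r s \<mu> \<xi>) z" if "z \<in> U" for z
    unfolding F_def grady_def using frechet_derivative_at[OF dL[OF that]] by simp
  obtain F' where "(F has_derivative F') (at z0)" using Fd unfolding differentiable_def by blast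
  then have "(grady (Lag f h g r s \<mu> \<xi>) has_derivative F') (at z0)"
    by (rule has_derivative_transform_within_open[OF _ U(1) U(2)]) (simp add: eq)
  then have "grady (Lag f h g r s \<mu> \<xi>) differentiable at z0" unfolding differentiable_def by blast
  then show ?thesis by (rule linear_frechet_derivative)
qed

theorem proposition4p1:
  fixes f :: "'x::euclidean_space \<times> 'y::euclidean_space \<Rightarrow> real"
    and h g H G :: "nat \<Rightarrow> 'x \<times> 'y \<Rightarrow> real"
    and r s p q :: nat
    and xs :: 'x and ys :: 'y
    and \<mu>s \<xi>s :: "nat \<Rightarrow> real"
    and U :: "('x \<times> 'y) set"
  assumes U: "open U" "(xs, ys) \<in> U"
    and smooth_f: "C3_on U f"
    and smooth_h: "\<forall>i<r. C3_on U (h i)"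
    and smooth_g: "\<forall>i<s. C3_on U (g i)"
    and smooth_H: "\<forall>i<p. C2_on U (H i)"
    and smooth_G: "\<forall>i<q. C2_on U (G i)"
    and KKT: "lower_KKT f h g r s (xs, ys) \<mu>s \<xi>s"
    and A2: "SSOSC f h g r s (xs, ys)"
    and A4: "LICQ h g r s (xs, ys)"
  shows "GMFCQ_Omega1 f h g H G r s p q (xs, ys) \<mu>s \<xi>s
     \<longleftrightarrow> GMFCQ_Omega2 f h g H G r s p q (xs, ys) \<mu>s \<xi>s"
proof -
  define F where "F = frechet_derivative (grady (Lag f h g r s \<mu>s \<xi>s)) (at (xs, ys))"
  have L: "linear F" unfolding F_def by (rule lag_lin[OF U smooth_f smooth_h smooth_g])
  have Qe: "Hyy f h g r s \<mu>s \<xi>s (xs, ys) = (\<lambda>dy. F (0, dy))"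
    by (rule ext) (simp add: Hyy_def F_def)
  have Pe: "Hyx f h g r s \<mu>s \<xi>s (xs, ys) = (\<lambda>dx. F (dx, 0))"
    by (rule ext) (simp add: Hyx_def F_def)
  have linQ: "linear (Hyy f h g r s \<mu>s \<xi>s (xs, ys))"
    unfolding Qe
  proof (rule linearI)
    fix a b :: 'y
    have "F (0, a + b) = F ((0, a) + (0, b))" by simp
    then show "F (0, a + b) = F (0, a) + F (0, b)" by (simp only: linear_add[OF L])
  next
    fix c :: real and a :: 'y
    have "F (0, c *\<^sub>R a) = F (c *\<^sub>R (0, a))" by simp
    then show "F (0, c *\<^sub>R a) = c *\<^sub>R F (0, a)" by (simp only: linear_scale[OF L])
  qed
  have linP: "linear (Hyx f h g r s \<mu>s \<xi>s (xs, ys))"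
    unfolding Pe
  proof (rule linearI)
    fix a b :: 'x
    have "F (a + b, 0) = F ((a, 0) + (b, 0))" by simp
    then show "F (a + b, 0) = F (a, 0) + F (b, 0)" by (simp only: linear_add[OF L])
  next
    fix c :: real and a :: 'x
    have "F (c *\<^sub>R a, 0) = F (c *\<^sub>R (a, 0))" by simp
    then show "F (c *\<^sub>R a, 0) = c *\<^sub>R F (a, 0)" by (simp only: linear_scale[OF L])
  qed
  interpret B: bil "Hyy f h g r s \<mu>s \<xi>s (xs, ys)" "Hyx f h g r s \<mu>s \<xi>s (xs, ys)"
    "\<lambda>i. grady (h i) (xs, ys)" "\<lambda>i. grady (g i) (xs, ys)" "\<lambda>i. grady (H i) (xs, ys)" "\<lambda>i. grady (G i) (xs, ys)"
    "\<lambda>i. gradx (h i) (xs, ys)" "\<lambda>i. gradx (g i) (xs, ys)" "\<lambda>i. gradx (H i) (xs, ys)" "\<lambda>i. gradx (G i) (xs, ys)"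
    "\<lambda>i. g i (xs, ys)" "\<lambda>i. G i (xs, ys)" \<xi>s r s p q
  proof (rule bil.intro)
    show "linear (Hyy f h g r s \<mu>s \<xi>s (xs, ys))" by (rule linQ)
  next
    show "linear (Hyx f h g r s \<mu>s \<xi>s (xs, ys))" by (rule linP)
  next
    fix i assume "i < s"
    then show "0 \<le> \<xi>s i \<and> g i (xs, ys) \<le> 0 \<and> \<xi>s i * g i (xs, ys) = 0"
      using KKT unfolding lower_KKT_def by blast
  next
    fix dy :: 'y
    assume "dy \<noteq> 0" "\<forall>i<r. grady (h i) (xs, ys) \<bullet> dy = 0"
      "\<forall>i<s. g i (xs, ys) = 0 \<and> \<xi>s i > 0 \<longrightarrow> grady (g i) (xs, ys) \<bullet> dy = 0"
    then show "dy \<bullet> Hyy f h g r s \<mu>s \<xi>s (xs, ys) dy > 0"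
      using A2 KKT unfolding SSOSC_def by blast
  next
    fix a b :: "nat \<Rightarrow> real"
    assume "(\<Sum>i<r. a i *\<^sub>R grady (h i) (xs, ys)) + (\<Sum>i\<in>{i. i < s \<and> g i (xs, ys) = 0}. b i *\<^sub>R grady (g i) (xs, ys)) = 0"
    then show "(\<forall>i<r. a i = 0) \<and> (\<forall>i<s. g i (xs, ys) = 0 \<longrightarrow> b i = 0)"
      using A4 unfolding LICQ_def by blast
  qed
  have e1: "GMFCQ_Omega1 f h g H G r s p q (xs, ys) \<mu>s \<xi>s \<longleftrightarrow> (\<forall>w. B.clw w \<longrightarrow> B.G1w w)"
    unfolding GMFCQ_Omega1_def B.clw_def B.G1w_def clarkeW_def HWy_def B.HW_def AW_system_def B.AWs_def
    by (rule refl)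
  have e2: "GMFCQ_Omega2 f h g H G r s p q (xs, ys) \<mu>s \<xi>s \<longleftrightarrow> (\<forall>w. B.clw w \<longrightarrow> B.G2w w)"
    unfolding GMFCQ_Omega2_def B.clw_def B.G2w_def B.EE_def clarkeW_def Arow1_def Arow2_def Arow3_def Arow4_def
    by (rule refl)
  show ?thesis unfolding e1 e2 using B.G_equiv by blast
qed

end
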